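(* Let $\mathbb{F}$ be a field. (i) Let $P(\lambda)=L(\lambda)R(\lambda)$ with $L\in\mathbb{F}[\lambda]^{m\times r}$ and $R\in\mathbb{F}[\lambda]^{r\times n}$. If $L$ is column reduced or $R$ is row reduced, then $\deg(P)=\max_{1\le i\le r}\{\deg(L_{*i})+\deg(R_{i*})\}$. (ii) Let $P(\lambda)=L(\lambda)E(\lambda)R(\lambda)$ with $L\in\mathbb{F}[\lambda]^{m\times r}$, $E=(e_{ij})\in\mathbb{F}[\lambda]^{r\times s}$, $R\in\mathbb{F}[\lambda]^{s\times n}$. If $L$ is column reduced and $R$ is row reduced, then $\deg(P)=\max_{1\le i\le r,\,1\le j\le s}\{\deg(L_{*i})+\deg(e_{ij})+\deg(R_{j*})\}$.
   Context: Degree of a polynomial vector/matrix: maximum degree of its entries, $\deg0=-\infty$. $L_{*i}$: $i$th column, $R_{i*}$: $i$th row. For $N\in\mathbb{F}[\lambda]^{m\times n}$ with column degrees $d'_1,\dots,d'_n$, the highest-column-degree coefficient matrix $N_{hc}$ is the constant matrix whose $j$th column is the coefficient of $\lambda^{d'_j}$ in the $j$th column of $N$; $N$ is column reduced if $N_{hc}$ has full column rank. Analogously, with row degrees $d_i$, $M_{hr}$ has as $i$th row the coefficient of $\lambda^{d_i}$ in the $i$th row of $M$, and $M$ is row reduced if $M_{hr}$ has full row rank. *)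

theory Defs
  imports "Jordan_Normal_Form.DL_Rank" "HOL-Computational_Algebra.Polynomial" "HOL-Library.Extended_Real"
begin

definition pdeg :: "'a::zero poly \<Rightarrow> ereal" where
  "pdeg p = (if p = 0 then -\<infinity> else ereal (real (degree p)))"

definition vdeg :: "'a::zero poly vec \<Rightarrow> ereal" where
  "vdeg v = Max (insert (-\<infinity>) {pdeg (v $ i) | i. i < dim_vec v})"

definition mdeg :: "'a::zero poly mat \<Rightarrow> ereal" where
  "mdeg A = Max (insert (-\<infinity>) {pdeg (A $$ (i, j)) | i j. i < dim_row A \<and> j < dim_col A})"

text \<open>Highest-column-degree coefficient matrix: the j-th column is the coefficient of
  lambda^(d'_j) in the j-th column, d'_j the degree of the j-th column
  (a zero column gives a zero column).\<close>
definition hc_mat :: "'a::zero poly mat \<Rightarrow> 'a mat" where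
  "hc_mat N = mat (dim_row N) (dim_col N) (\<lambda>(i, j).
     if vdeg (col N j) = -\<infinity> then 0
     else coeff (N $$ (i, j)) (nat \<lfloor>real_of_ereal (vdeg (col N j))\<rfloor>))"

definition hr_mat :: "'a::zero poly mat \<Rightarrow> 'a mat" where
  "hr_mat M = mat (dim_row M) (dim_col M) (\<lambda>(i, j).
     if vdeg (row M i) = -\<infinity> then 0
     else coeff (M $$ (i, j)) (nat \<lfloor>real_of_ereal (vdeg (row M i))\<rfloor>))"

definition column_reduced :: "'a::field poly mat \<Rightarrow> bool" where
  "column_reduced N \<longleftrightarrow> vec_space.rank (dim_row N) (hc_mat N) = dim_col N"

definition row_reduced :: "'a::field poly mat \<Rightarrow> bool" where
  "row_reduced M \<longleftrightarrow> vec_space.rank (dim_col M) (transpose_mat (hr_mat M)) = dim_row M"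

end

theory Submission
  imports Defs
begin

abbreviation MX :: "ereal set \<Rightarrow> ereal" where "MX S \<equiv> Max (insert (-\<infinity>) S)"

lemma MX_le_iff: "finite S \<Longrightarrow> MX S \<le> x \<longleftrightarrow> (\<forall>s\<in>S. s \<le> x)"
  by simp

lemma MX_ge: "finite S \<Longrightarrow> s \<in> S \<Longrightarrow> s \<le> MX S"
  by simp

lemma MX_cases: "finite S \<Longrightarrow> MX S = -\<infinity> \<or> MX S \<in> S"
  using Max_in[of "insert (-\<infinity>) S"] by auto

lemma pdeg_ne_inf[simp]: "pdeg p \<noteq> \<infinity>"
  by (simp add: pdeg_def)

lemma pdeg_mult: "pdeg (p * (q :: 'a::idom poly)) = pdeg p + pdeg q"
  by (simp add: pdeg_def degree_mult_eq)

lemma pdeg_add_le: "pdeg (p + q) \<le> max (pdeg p) (pdeg q)"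
proof -
  have "degree (p+q) \<le> max (degree p) (degree q)" by (rule degree_add_le_max)
  then show ?thesis
    by (cases "p = 0"; cases "q = 0"; cases "p + q = 0") (auto simp: pdeg_def max_def split: if_splits)
qed

lemma pdeg_sum_le: "finite A \<Longrightarrow> (\<And>i. i \<in> A \<Longrightarrow> pdeg (f i) \<le> x) \<Longrightarrow> pdeg (sum f A) \<le> x"
proof (induction A rule: finite_induct)
  case empty then show ?case by (simp add: pdeg_def)
next
  case (insert a A)
  then have "pdeg (f a + sum f A) \<le> x"
    using pdeg_add_le[of "f a" "sum f A"] by (meson insertCI max.boundedI order.trans)
  then show ?case using insert by simp
qed

lemma pdeg_le_coeff: "pdeg p \<le> ereal (real n) \<Longrightarrow> n < k \<Longrightarrow> coeff p k = 0"
  by (cases "p = 0") (auto simp: pdeg_def intro!: coeff_eq_0)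

lemma pdeg_ge_coeff: "coeff p k \<noteq> 0 \<Longrightarrow> ereal (real k) \<le> pdeg p"
  by (cases "p = 0") (auto simp: pdeg_def le_degree)

lemma pdeg_le_degree: "pdeg p \<le> ereal (real n) \<Longrightarrow> degree p \<le> n"
  by (cases "p = 0") (auto simp: pdeg_def)

lemma vdeg_alt: "vdeg v = MX ((\<lambda>i. pdeg (v $ i)) ` {..<dim_vec v})"
  unfolding vdeg_def by (rule arg_cong[where f=MX]) auto

lemma mdeg_alt: "mdeg A = MX ((\<lambda>(i,j). pdeg (A $$ (i,j))) ` ({..<dim_row A} \<times> {..<dim_col A}))"
  unfolding mdeg_def by (rule arg_cong[where f=MX]) auto

lemma vdeg_ge: "i < dim_vec v \<Longrightarrow> pdeg (v $ i) \<le> vdeg v"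
  unfolding vdeg_alt by (rule MX_ge) auto

lemma vdeg_cases: "vdeg v = -\<infinity> \<or> (\<exists>i<dim_vec v. vdeg v = pdeg (v $ i))"
  using MX_cases[of "(\<lambda>i. pdeg (v $ i)) ` {..<dim_vec v}"] unfolding vdeg_alt by auto

lemma vdeg_ne_inf[simp]: "vdeg v \<noteq> \<infinity>"
  using vdeg_cases[of v] by auto

lemma vdeg_nat: "vdeg v \<noteq> -\<infinity> \<Longrightarrow> vdeg v = ereal (real (nat \<lfloor>real_of_ereal (vdeg v)\<rfloor>))"
  using vdeg_cases[of v] by (auto simp: pdeg_def split: if_splits)

lemma (in vec_space) full_rank_distinct:
  assumes "A \<in> carrier_mat n nc" "rank A = nc"
  shows "distinct (cols A)"
proof (rule ccontr)
  assume nd: "\<not> distinct (cols A)"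
  obtain S where "maximal S (\<lambda>T. T \<subseteq> set (cols A) \<and> lin_indpt T)"
    using maximal_exists[of "(\<lambda>T. T \<subseteq> set (cols A) \<and> lin_indpt T)" "card (set (cols A))" "{}"]
    by (meson List.finite_set card_mono empty_iff empty_subsetI finite_lin_indpt2 rev_finite_subset)
  then have "card S \<le> card (set (cols A))" by (simp add: card_mono maximal_def)
  moreover have "card (set (cols A)) < nc"
    using nd assms(1) card_distinct card_length cols_length carrier_matD(2) nat_less_le by metis
  ultimately show False
    using rank_card_indpt[OF assms(1) \<open>maximal S _\<close>] assms(2) by simp
qed

lemma (in vec_space) full_rank_inj:
  assumes "A \<in> carrier_mat n nc" "rank A = nc" "x \<in> carrier_vec nc" "A *\<^sub>v x = 0\<^sub>v n"
  shows "x = 0\<^sub>v nc"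
proof (rule ccontr)
  assume "x \<noteq> 0\<^sub>v nc"
  have d: "distinct (cols A)" using full_rank_distinct assms by blast
  have "lin_dep (set (cols A))" using lin_depI[OF assms(1,3) \<open>x \<noteq> _\<close> assms(4) d] .
  moreover have "lin_indpt (set (cols A))" using full_rank_lin_indpt[OF assms(1,2) d] .
  ultimately show False by blast
qed

lemma coeff_mult_split:
  assumes "degree p \<le> a" "degree q \<le> b"
  shows "coeff (p * q) (a + b) = coeff p a * coeff q b"
proof -
  have "coeff (p * q) (a + b) = (\<Sum>i\<le>a+b. coeff p i * coeff q (a + b - i))"
    by (rule coeff_mult)
  also have "\<dots> = coeff p a * coeff q (a + b - a) + (\<Sum>i\<in>{..a + b} - {a}. coeff p i * coeff q (a + b - i))"
    by (rule sum.remove) auto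
  also have "(\<Sum>i\<in>{..a + b} - {a}. coeff p i * coeff q (a + b - i)) = 0"
    proof (rule sum.neutral, intro ballI)
      fix i assume "i \<in> {..a + b} - {a}"
      then have "i < a \<or> i > a" by auto
      then show "coeff p i * coeff q (a + b - i) = 0"
      proof
        assume "i < a"
        then have "coeff q (a + b - i) = 0" using assms(2) by (intro coeff_eq_0) linarith
        then show ?thesis by simp
      next
        assume "i > a"
        then have "coeff p i = 0" using assms(1) by (intro coeff_eq_0) linarith
        then show ?thesis by simp
      qed
    qed
  finally show ?thesis by simp
qed

lemma lemA:
  fixes N :: "'a::field poly mat"
  assumes N: "N \<in> carrier_mat m r" and cr: "column_reduced N" and v: "v \<in> carrier_vec r"
  shows "vdeg (N *\<^sub>v v) = MX ((\<lambda>i. vdeg (col N i) + pdeg (v$i)) ` {..<r})"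
proof -
  define d where "d i = vdeg (col N i)" for i
  have dinf[simp]: "d i \<noteq> \<infinity>" for i by (simp add: d_def)
  define M where "M = MX ((\<lambda>i. d i + pdeg (v$i)) ` {..<r})"
  have entry: "(N *\<^sub>v v)$k = (\<Sum>i<r. N$$(k,i) * v$i)" if "k < m" for k
    using N v that by (auto simp: mult_mat_vec_def scalar_prod_def atLeast0LessThan)
  have dimNv: "dim_vec (N *\<^sub>v v) = m" using N by simp
  have Nle: "pdeg (N$$(k,i)) \<le> d i" if "k < m" "i < r" for k i
    using vdeg_ge[of k "col N i"] N that by (simp add: d_def)
  have Mge: "d i + pdeg (v$i) \<le> M" if "i < r" for i
    unfolding M_def by (rule MX_ge) (use that in auto)
  have le: "vdeg (N *\<^sub>v v) \<le> M"
    unfolding vdeg_alt dimNv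
  proof (subst MX_le_iff, simp, intro ballI)
    fix x assume "x \<in> (\<lambda>i. pdeg ((N *\<^sub>v v) $ i)) ` {..<m}"
    then obtain k where k: "k < m" "x = pdeg ((N *\<^sub>v v) $ k)" by auto
    have "pdeg (\<Sum>i<r. N$$(k,i) * v$i) \<le> M"
    proof (rule pdeg_sum_le, simp)
      fix i assume "i \<in> {..<r}"
      then have i: "i < r" by simp
      have "pdeg (N$$(k,i) * v$i) = pdeg (N$$(k,i)) + pdeg (v$i)" by (rule pdeg_mult)
      also have "\<dots> \<le> d i + pdeg (v$i)" using Nle[OF k(1) i] by (rule add_right_mono)
      also have "\<dots> \<le> M" using Mge[OF i] .
      finally show "pdeg (N$$(k,i) * v$i) \<le> M" .
    qed
    then show "x \<le> M" using k entry by simp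
  qed
  have ge: "M \<le> vdeg (N *\<^sub>v v)"
  proof (cases "M = -\<infinity>")
    case True then show ?thesis by simp
  next
    case False
    then have "M \<in> (\<lambda>i. d i + pdeg (v$i)) ` {..<r}"
      using MX_cases[of "(\<lambda>i. d i + pdeg (v$i)) ` {..<r}"] unfolding M_def by auto
    then obtain i0 where i0: "i0 < r" "M = d i0 + pdeg (v$i0)" by auto
    define dn where "dn i = nat \<lfloor>real_of_ereal (d i)\<rfloor>" for i
    have dn: "d i \<noteq> -\<infinity> \<Longrightarrow> d i = ereal (real (dn i))" for i
      unfolding d_def dn_def by (rule vdeg_nat)
    have di0: "d i0 \<noteq> -\<infinity>" and vi0: "v$i0 \<noteq> 0"
      using False i0 by (auto simp: pdeg_def split: if_splits)
    define D where "D = dn i0 + degree (v$i0)"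
    have MD: "M = ereal (real D)" using i0 dn[OF di0] vi0 by (simp add: pdeg_def D_def)
    define c where "c = vec r (\<lambda>i. if d i + pdeg (v$i) = M then lead_coeff (v$i) else 0)"
    have hcN: "hc_mat N \<in> carrier_mat m r" using N by (simp add: hc_mat_def)
    have hce: "hc_mat N $$ (k,i) = (if d i = -\<infinity> then 0 else coeff (N$$(k,i)) (dn i))"
      if "k < m" "i < r" for k i
      using N that by (simp add: hc_mat_def d_def dn_def)
    have coeffeq: "coeff ((N *\<^sub>v v)$k) D = (hc_mat N *\<^sub>v c) $ k" if k: "k < m" for k
    proof -
      have "coeff ((N *\<^sub>v v)$k) D = (\<Sum>i<r. coeff (N$$(k,i) * v$i) D)"
        using entry[OF k] by (simp add: coeff_sum)
      also have "\<dots> = (\<Sum>i<r. hc_mat N $$ (k,i) * c $ i)"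
      proof (rule sum.cong, simp)
        fix i assume "i \<in> {..<r}"
        then have i: "i < r" by simp
        show "coeff (N$$(k,i) * v$i) D = hc_mat N $$ (k,i) * c $ i"
        proof (cases "d i + pdeg (v$i) = M")
          case True
          then have di: "d i \<noteq> -\<infinity>" and vi: "v$i \<noteq> 0" using False by (auto simp: pdeg_def split: if_splits)
          have Dsplit: "D = dn i + degree (v$i)"
            using True dn[OF di] vi MD by (simp add: pdeg_def)
          have "degree (N$$(k,i)) \<le> dn i"
            using Nle[OF k i] dn[OF di] by (intro pdeg_le_degree) simp
          then have "coeff (N$$(k,i) * v$i) D = coeff (N$$(k,i)) (dn i) * lead_coeff (v$i)"
            unfolding Dsplit by (intro coeff_mult_split) auto
          then show ?thesis using True di i k by (simp add: hce c_def)
        next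
          case nT: False
          have lt: "d i + pdeg (v$i) < M" using Mge[OF i] nT by simp
          have "pdeg (N$$(k,i) * v$i) \<le> d i + pdeg (v$i)"
            using pdeg_mult[of "N$$(k,i)" "v$i"] add_right_mono[OF Nle[OF k i], of "pdeg (v$i)"]
            by simp
          then have "pdeg (N$$(k,i) * v$i) < ereal (real D)"
            using lt MD by simp
          then have "coeff (N$$(k,i) * v$i) D = 0"
          proof (cases "N$$(k,i) * v$i = 0")
            case False
            assume "pdeg (N$$(k,i) * v$i) < ereal (real D)"
            then have "degree (N$$(k,i) * v$i) < D" using False unfolding pdeg_def by simp
            then show ?thesis by (intro coeff_eq_0)
          qed auto
          then show ?thesis using nT i by (simp add: c_def)
        qed
      qed
      also have "\<dots> = (hc_mat N *\<^sub>v c) $ k"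
        using hcN k by (auto simp: mult_mat_vec_def scalar_prod_def atLeast0LessThan c_def)
      finally show ?thesis .
    qed
    have cnz: "c \<noteq> 0\<^sub>v r"
    proof
      assume "c = 0\<^sub>v r"
      then have "c $ i0 = 0" using i0 by simp
      then show False using i0 vi0 by (simp add: c_def)
    qed
    have "hc_mat N *\<^sub>v c \<noteq> 0\<^sub>v m"
    proof
      assume z: "hc_mat N *\<^sub>v c = 0\<^sub>v m"
      have rk: "vec_space.rank m (hc_mat N) = r"
        using cr N by (simp add: column_reduced_def)
      have "c = 0\<^sub>v r"
        by (rule vec_space.full_rank_inj[OF hcN rk _ z]) (simp add: c_def)
      then show False using cnz by simp
    qed
    then obtain k where k: "k < m" "(hc_mat N *\<^sub>v c) $ k \<noteq> 0"
      using hcN by (metis carrier_matD(1) dim_mult_mat_vec eq_vecI index_zero_vec(1,2))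
    then have "coeff ((N *\<^sub>v v)$k) D \<noteq> 0" using coeffeq by simp
    then have "ereal (real D) \<le> pdeg ((N *\<^sub>v v)$k)" by (rule pdeg_ge_coeff)
    also have "\<dots> \<le> vdeg (N *\<^sub>v v)" using k dimNv by (intro vdeg_ge) simp
    finally show ?thesis using MD by simp
  qed
  show ?thesis using le ge unfolding M_def d_def by simp
qed

lemma MX_nest:
  assumes "finite A" "finite B"
  shows "MX ((\<lambda>a. MX ((\<lambda>b. F a b) ` B)) ` A) = MX ((\<lambda>(a,b). F a b) ` (A \<times> B))"
proof (rule antisym)
  show "MX ((\<lambda>a. MX ((\<lambda>b. F a b) ` B)) ` A) \<le> MX ((\<lambda>(a,b). F a b) ` (A \<times> B))"
    using assms by (auto simp: MX_le_iff intro!: MX_ge)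
  show "MX ((\<lambda>(a,b). F a b) ` (A \<times> B)) \<le> MX ((\<lambda>a. MX ((\<lambda>b. F a b) ` B)) ` A)"
  proof (subst MX_le_iff, use assms in simp, intro ballI)
    fix x assume "x \<in> (\<lambda>(a,b). F a b) ` (A \<times> B)"
    then obtain a b where ab: "a \<in> A" "b \<in> B" "x = F a b" by auto
    have "F a b \<le> MX ((\<lambda>b. F a b) ` B)" using ab assms by (intro MX_ge) auto
    also have "\<dots> \<le> MX ((\<lambda>a. MX ((\<lambda>b. F a b) ` B)) ` A)" using ab assms by (intro MX_ge) auto
    finally show "x \<le> MX ((\<lambda>a. MX ((\<lambda>b. F a b) ` B)) ` A)" using ab by simp
  qed
qed

lemma MX_add_left:
  assumes "finite B" "c \<noteq> \<infinity>"
  shows "c + MX (f ` B) = MX ((\<lambda>b. c + f b) ` B)"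
proof (rule antisym)
  show "c + MX (f ` B) \<le> MX ((\<lambda>b. c + f b) ` B)"
  proof (cases "MX (f ` B) = -\<infinity>")
    case True then show ?thesis using assms(2) by (cases c) auto
  next
    case False
    then obtain b where "b \<in> B" "MX (f ` B) = f b" using MX_cases[of "f ` B"] assms(1) by auto
    then show ?thesis using assms(1) by (simp add: MX_ge)
  qed
  show "MX ((\<lambda>b. c + f b) ` B) \<le> c + MX (f ` B)"
    using assms(1) by (auto simp: MX_le_iff intro!: add_left_mono MX_ge)
qed

lemma swap_img: "(\<lambda>(j,i). F i j) ` (B \<times> A) = (\<lambda>(i,j). F i j) ` (A \<times> B)"
proof -
  have "(\<lambda>(j,i). F i j) ` (B \<times> A) = (\<lambda>(j,i). F i j) ` (prod.swap ` (A \<times> B))"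
    by (simp add: product_swap)
  also have "\<dots> = (\<lambda>(i,j). F i j) ` (A \<times> B)"
    by (simp add: image_image case_prod_beta)
  finally show ?thesis .
qed

lemma vdeg_col: "j < dim_col A \<Longrightarrow> vdeg (col A j) = MX ((\<lambda>i. pdeg (A $$ (i,j))) ` {..<dim_row A})"
  unfolding vdeg_alt by (rule arg_cong[where f=MX]) auto

lemma vdeg_row: "i < dim_row A \<Longrightarrow> vdeg (row A i) = MX ((\<lambda>j. pdeg (A $$ (i,j))) ` {..<dim_col A})"
  unfolding vdeg_alt by (rule arg_cong[where f=MX]) auto

lemma mdeg_cols: "mdeg A = MX ((\<lambda>j. vdeg (col A j)) ` {..<dim_col A})"
proof -
  have "MX ((\<lambda>j. vdeg (col A j)) ` {..<dim_col A}) =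
        MX ((\<lambda>j. MX ((\<lambda>i. pdeg (A $$ (i,j))) ` {..<dim_row A})) ` {..<dim_col A})"
    by (rule arg_cong[where f=MX]) (auto simp: vdeg_col)
  also have "\<dots> = MX ((\<lambda>(j,i). pdeg (A $$ (i,j))) ` ({..<dim_col A} \<times> {..<dim_row A}))"
    by (rule MX_nest) auto
  also have "\<dots> = mdeg A"
    unfolding mdeg_alt by (rule arg_cong[where f=MX], rule swap_img)
  finally show ?thesis by simp
qed

lemma mdeg_transpose: "mdeg (transpose_mat A) = mdeg A"
proof -
  have "(\<lambda>(i,j). pdeg (transpose_mat A $$ (i,j))) ` ({..<dim_col A} \<times> {..<dim_row A})
      = (\<lambda>(i,j). pdeg (A $$ (j,i))) ` ({..<dim_col A} \<times> {..<dim_row A})"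
    by (rule image_cong[OF refl]) auto
  also have "\<dots> = (\<lambda>(i,j). pdeg (A $$ (i,j))) ` ({..<dim_row A} \<times> {..<dim_col A})"
    by (rule swap_img)
  finally show ?thesis unfolding mdeg_alt by simp
qed

lemma column_reduced_transpose: "column_reduced (transpose_mat R) = row_reduced R"
proof -
  have "hc_mat (transpose_mat R) = transpose_mat (hr_mat R)"
    by (rule eq_matI) (auto simp: hc_mat_def hr_mat_def)
  then show ?thesis by (simp add: column_reduced_def row_reduced_def hr_mat_def)
qed

lemma partI_col:
  fixes L R :: "'a::field poly mat"
  assumes L: "L \<in> carrier_mat m r" and R: "R \<in> carrier_mat r n" and cr: "column_reduced L"
  shows "mdeg (L * R) = MX ((\<lambda>i. vdeg (col L i) + vdeg (row R i)) ` {..<r})"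
proof -
  have "mdeg (L * R) = MX ((\<lambda>j. vdeg (L *\<^sub>v col R j)) ` {..<n})"
    unfolding mdeg_cols using L R
    by (intro arg_cong[where f=MX] image_cong) (auto simp del: col_mult simp add: col_mult2[OF L R])
  also have "\<dots> = MX ((\<lambda>j. MX ((\<lambda>i. vdeg (col L i) + pdeg (R $$ (i,j))) ` {..<r})) ` {..<n})"
  proof (rule arg_cong[where f=MX], rule image_cong[OF refl])
    fix j assume "j \<in> {..<n}"
    then have j: "j < n" by simp
    have "vdeg (L *\<^sub>v col R j) = MX ((\<lambda>i. vdeg (col L i) + pdeg (col R j $ i)) ` {..<r})"
      using R j by (intro lemA[OF L cr]) auto
    also have "\<dots> = MX ((\<lambda>i. vdeg (col L i) + pdeg (R $$ (i,j))) ` {..<r})"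
      using R j by (intro arg_cong[where f=MX]) auto
    finally show "vdeg (L *\<^sub>v col R j) = \<dots>" .
  qed
  also have "\<dots> = MX ((\<lambda>(j,i). vdeg (col L i) + pdeg (R $$ (i,j))) ` ({..<n} \<times> {..<r}))"
    by (rule MX_nest) auto
  also have "\<dots> = MX ((\<lambda>(i,j). vdeg (col L i) + pdeg (R $$ (i,j))) ` ({..<r} \<times> {..<n}))"
    by (rule arg_cong[where f=MX], rule swap_img)
  also have "\<dots> = MX ((\<lambda>i. MX ((\<lambda>j. vdeg (col L i) + pdeg (R $$ (i,j))) ` {..<n})) ` {..<r})"
    by (rule MX_nest[symmetric]) auto
  also have "\<dots> = MX ((\<lambda>i. vdeg (col L i) + vdeg (row R i)) ` {..<r})"
  proof (rule arg_cong[where f=MX], rule image_cong[OF refl])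
    fix i assume "i \<in> {..<r}"
    then have i: "i < r" by simp
    show "MX ((\<lambda>j. vdeg (col L i) + pdeg (R $$ (i,j))) ` {..<n}) = vdeg (col L i) + vdeg (row R i)"
      using R i by (simp add: vdeg_row MX_add_left[symmetric])
  qed
  finally show ?thesis .
qed

lemma partI_row:
  fixes L R :: "'a::field poly mat"
  assumes L: "L \<in> carrier_mat m r" and R: "R \<in> carrier_mat r n" and rr: "row_reduced R"
  shows "mdeg (L * R) = MX ((\<lambda>i. vdeg (col L i) + vdeg (row R i)) ` {..<r})"
proof -
  have "mdeg (L * R) = mdeg (transpose_mat R * transpose_mat L)"
    using L R mdeg_transpose[of "L * R"] by (simp add: transpose_mult)
  also have "\<dots> = MX ((\<lambda>i. vdeg (col (transpose_mat R) i) + vdeg (row (transpose_mat L) i)) ` {..<r})"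
    using L R rr by (intro partI_col) (auto simp: column_reduced_transpose)
  also have "\<dots> = MX ((\<lambda>i. vdeg (col L i) + vdeg (row R i)) ` {..<r})"
    using L R by (intro arg_cong[where f=MX]) (auto simp: add.commute)
  finally show ?thesis .
qed

lemma partII:
  fixes L E R :: "'a::field poly mat"
  assumes L: "L \<in> carrier_mat m r" and E: "E \<in> carrier_mat r s" and R: "R \<in> carrier_mat s n"
    and cr: "column_reduced L" and rr: "row_reduced R"
  shows "mdeg (L * E * R) = MX ((\<lambda>(i,j). vdeg (col L i) + pdeg (E $$ (i,j)) + vdeg (row R j)) ` ({..<r} \<times> {..<s}))"
proof -
  have ER: "E * R \<in> carrier_mat r n" using E R by simp
  have "mdeg (L * E * R) = mdeg (L * (E * R))" using L E R by simp
  also have "\<dots> = MX ((\<lambda>i. vdeg (col L i) + vdeg (row (E * R) i)) ` {..<r})"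
    by (rule partI_col[OF L ER cr])
  also have "\<dots> = MX ((\<lambda>i. MX ((\<lambda>j. vdeg (col L i) + pdeg (E $$ (i,j)) + vdeg (row R j)) ` {..<s})) ` {..<r})"
  proof (rule arg_cong[where f=MX], rule image_cong[OF refl])
    fix i assume "i \<in> {..<r}"
    then have i: "i < r" by simp
    have RT: "transpose_mat R \<in> carrier_mat n s" using R by simp
    have crT: "column_reduced (transpose_mat R)" using rr by (simp add: column_reduced_transpose)
    have "row (E * R) i = transpose_mat R *\<^sub>v row E i"
      using E R i by (intro eq_vecI) (auto simp: comm_scalar_prod[of _ s])
    then have "vdeg (row (E * R) i) = MX ((\<lambda>j. vdeg (col (transpose_mat R) j) + pdeg (row E i $ j)) ` {..<s})"
      using E i by (simp add: lemA[OF RT crT])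
    also have "\<dots> = MX ((\<lambda>j. pdeg (E $$ (i,j)) + vdeg (row R j)) ` {..<s})"
      using E R i by (intro arg_cong[where f=MX]) (auto simp: add.commute)
    finally show "vdeg (col L i) + vdeg (row (E * R) i) = MX ((\<lambda>j. vdeg (col L i) + pdeg (E $$ (i,j)) + vdeg (row R j)) ` {..<s})"
      by (simp add: MX_add_left add.assoc)
  qed
  also have "\<dots> = MX ((\<lambda>(i,j). vdeg (col L i) + pdeg (E $$ (i,j)) + vdeg (row R j)) ` ({..<r} \<times> {..<s}))"
    by (rule MX_nest) auto
  finally show ?thesis .
qed

theorem corollary3p17:
  fixes L R L2 E R2 :: "'a::field poly mat" and m r n m2 r2 s n2 :: nat
  shows
  "(L \<in> carrier_mat m r \<and> R \<in> carrier_mat r n \<and> (column_reduced L \<or> row_reduced R) \<longrightarrow>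
     mdeg (L * R) = Max (insert (-\<infinity>) {vdeg (col L i) + vdeg (row R i) | i. i < r}))
   \<and>
   (L2 \<in> carrier_mat m2 r2 \<and> E \<in> carrier_mat r2 s \<and> R2 \<in> carrier_mat s n2 \<and>
     column_reduced L2 \<and> row_reduced R2 \<longrightarrow>
     mdeg (L2 * E * R2) = Max (insert (-\<infinity>)
        {vdeg (col L2 i) + pdeg (E $$ (i, j)) + vdeg (row R2 j) | i j. i < r2 \<and> j < s}))"
proof (intro conjI impI)
  have s1: "{vdeg (col L i) + vdeg (row R i) | i. i < r} = (\<lambda>i. vdeg (col L i) + vdeg (row R i)) ` {..<r}"
    by auto
  assume "L \<in> carrier_mat m r \<and> R \<in> carrier_mat r n \<and> (column_reduced L \<or> row_reduced R)"
  then show "mdeg (L * R) = Max (insert (-\<infinity>) {vdeg (col L i) + vdeg (row R i) | i. i < r})"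
    unfolding s1 using partI_col[of L m r R n] partI_row[of L m r R n] by auto
next
  have s2: "{vdeg (col L2 i) + pdeg (E $$ (i, j)) + vdeg (row R2 j) | i j. i < r2 \<and> j < s} =
     (\<lambda>(i,j). vdeg (col L2 i) + pdeg (E $$ (i,j)) + vdeg (row R2 j)) ` ({..<r2} \<times> {..<s})"
    by auto
  assume "L2 \<in> carrier_mat m2 r2 \<and> E \<in> carrier_mat r2 s \<and> R2 \<in> carrier_mat s n2 \<and>
     column_reduced L2 \<and> row_reduced R2"
  then show "mdeg (L2 * E * R2) = Max (insert (-\<infinity>)
        {vdeg (col L2 i) + pdeg (E $$ (i, j)) + vdeg (row R2 j) | i j. i < r2 \<and> j < s})"
    unfolding s2 using partII[of L2 m2 r2 E s R2 n2] by auto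
qed

end
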